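(* Let $G=(V,E)$ be a claw-free graph and $I$ a maximum cardinality independent set of $G$. Assume there exist a minimum independent dominating set $D$ of $G$ and a pack $X$ with $|D\cap X|>1$. Then there exists a minimum independent dominating set $D'$ of $G$ with $D'\cap I\neq\emptyset$.
   Context: Graphs are finite, simple, undirected; claw-free means no induced $K_{1,3}$. An independent dominating set is an independent set $S$ such that every vertex outside $S$ has a neighbour in $S$; a minimum independent dominating set is one of minimum cardinality. For $a\ne b$ in $I$ let $V_{a,b}=\{v\in V\setminus I: N(v)\cap I=\{a,b\}\}$, and for $a\in I$ let $V_a=\{v\in V\setminus I : N(v)\cap I=\{a\}\}$; these sets are called packs. *)

theory Defs
  imports Main
begin

definition graph :: "'a set \<Rightarrow> ('a \<Rightarrow> 'a \<Rightarrow> bool) \<Rightarrow> bool" where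
  "graph V E \<longleftrightarrow> finite V \<and> (\<forall>u v. E u v \<longrightarrow> u \<in> V \<and> v \<in> V)
     \<and> (\<forall>u v. E u v \<longrightarrow> E v u) \<and> (\<forall>v. \<not> E v v)"

definition nbhd :: "('a \<Rightarrow> 'a \<Rightarrow> bool) \<Rightarrow> 'a \<Rightarrow> 'a set" where
  "nbhd E v = {u. E v u}"

definition claw_free :: "'a set \<Rightarrow> ('a \<Rightarrow> 'a \<Rightarrow> bool) \<Rightarrow> bool" where
  "claw_free V E \<longleftrightarrow> \<not> (\<exists>c\<in>V. \<exists>x\<in>V. \<exists>y\<in>V. \<exists>z\<in>V.
      E c x \<and> E c y \<and> E c z \<and> x \<noteq> y \<and> x \<noteq> z \<and> y \<noteq> z
      \<and> \<not> E x y \<and> \<not> E x z \<and> \<not> E y z)"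

definition independent :: "'a set \<Rightarrow> ('a \<Rightarrow> 'a \<Rightarrow> bool) \<Rightarrow> 'a set \<Rightarrow> bool" where
  "independent V E S \<longleftrightarrow> S \<subseteq> V \<and> (\<forall>u\<in>S. \<forall>v\<in>S. \<not> E u v)"

definition max_independent :: "'a set \<Rightarrow> ('a \<Rightarrow> 'a \<Rightarrow> bool) \<Rightarrow> 'a set \<Rightarrow> bool" where
  "max_independent V E S \<longleftrightarrow> independent V E S \<and>
     (\<forall>T. independent V E T \<longrightarrow> card T \<le> card S)"

definition indep_dominating :: "'a set \<Rightarrow> ('a \<Rightarrow> 'a \<Rightarrow> bool) \<Rightarrow> 'a set \<Rightarrow> bool" where
  "indep_dominating V E S \<longleftrightarrow> independent V E S \<and>
     (\<forall>v\<in>V - S. \<exists>u\<in>S. E v u)"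

definition min_indep_dominating :: "'a set \<Rightarrow> ('a \<Rightarrow> 'a \<Rightarrow> bool) \<Rightarrow> 'a set \<Rightarrow> bool" where
  "min_indep_dominating V E S \<longleftrightarrow> indep_dominating V E S \<and>
     (\<forall>T. indep_dominating V E T \<longrightarrow> card S \<le> card T)"

definition pack2 :: "'a set \<Rightarrow> ('a \<Rightarrow> 'a \<Rightarrow> bool) \<Rightarrow> 'a set \<Rightarrow> 'a \<Rightarrow> 'a \<Rightarrow> 'a set" where
  "pack2 V E I a b = {v \<in> V - I. nbhd E v \<inter> I = {a, b}}"

definition pack1 :: "'a set \<Rightarrow> ('a \<Rightarrow> 'a \<Rightarrow> bool) \<Rightarrow> 'a set \<Rightarrow> 'a \<Rightarrow> 'a set" where
  "pack1 V E I a = {v \<in> V - I. nbhd E v \<inter> I = {a}}"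

definition is_pack :: "'a set \<Rightarrow> ('a \<Rightarrow> 'a \<Rightarrow> bool) \<Rightarrow> 'a set \<Rightarrow> 'a set \<Rightarrow> bool" where
  "is_pack V E I X \<longleftrightarrow>
     (\<exists>a\<in>I. \<exists>b\<in>I. a \<noteq> b \<and> X = pack2 V E I a b) \<or> (\<exists>a\<in>I. X = pack1 V E I a)"

end

theory Submission
  imports Defs
begin

lemma two_elems: assumes "card A > 1" shows "\<exists>x y. x \<in> A \<and> y \<in> A \<and> x \<noteq> y"
proof (rule ccontr)
  assume "\<not> ?thesis"
  then have "\<forall>x\<in>A. \<forall>y\<in>A. x = y" by blast
  then have "card A \<le> 1" using card_le_Suc0_iff_eq[of A] card.infinite[of A] by (cases "finite A") auto
  with assms show False by simp
qed

lemma card_insert_le_Suc: "card (insert x A) \<le> Suc (card A)"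
  by (cases "finite A") (auto simp: card_insert_if)

theorem lemma8:
  fixes V :: "'a set" and E :: "'a \<Rightarrow> 'a \<Rightarrow> bool" and I D X :: "'a set"
  assumes "graph V E"
    and "claw_free V E"
    and "max_independent V E I"
    and "min_indep_dominating V E D"
    and "is_pack V E I X"
    and "card (D \<inter> X) > 1"
  shows "\<exists>D'. min_indep_dominating V E D' \<and> D' \<inter> I \<noteq> {}"
proof -
  have g: "finite V" "\<And>u v. E u v \<Longrightarrow> u \<in> V \<and> v \<in> V" "\<And>u v. E u v \<Longrightarrow> E v u" "\<And>v. \<not> E v v"
    using assms(1) unfolding graph_def by auto
  have cf: "\<And>c x y z. c \<in> V \<Longrightarrow> x \<in> V \<Longrightarrow> y \<in> V \<Longrightarrow> z \<in> V \<Longrightarrow>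
      E c x \<Longrightarrow> E c y \<Longrightarrow> E c z \<Longrightarrow> x \<noteq> y \<Longrightarrow> x \<noteq> z \<Longrightarrow> y \<noteq> z \<Longrightarrow>
      \<not> E x y \<Longrightarrow> \<not> E x z \<Longrightarrow> \<not> E y z \<Longrightarrow> False"
    using assms(2) unfolding claw_free_def by blast
  have IV: "I \<subseteq> V" and Iind: "\<And>u v. u \<in> I \<Longrightarrow> v \<in> I \<Longrightarrow> \<not> E u v"
    and Imax: "\<And>T. independent V E T \<Longrightarrow> card T \<le> card I"
    using assms(3) unfolding max_independent_def independent_def by auto
  have DV: "D \<subseteq> V" and Dind: "\<And>u v. u \<in> D \<Longrightarrow> v \<in> D \<Longrightarrow> \<not> E u v"
    and Ddom: "\<And>v. v \<in> V - D \<Longrightarrow> \<exists>u\<in>D. E v u"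
    and Dmin: "\<And>T. indep_dominating V E T \<Longrightarrow> card D \<le> card T"
    using assms(4) unfolding min_indep_dominating_def indep_dominating_def independent_def by auto
  obtain x y where xy: "x \<in> D \<inter> X" "y \<in> D \<inter> X" "x \<noteq> y" using two_elems[OF assms(6)] by blast
  have nxy: "\<not> E x y" using Dind xy by auto
  have xyV: "x \<in> V" "y \<in> V" using xy DV by auto
  show ?thesis
  using assms(5) unfolding is_pack_def
  proof (elim disjE bexE conjE)
    fix a assume aI: "a \<in> I" and X: "X = pack1 V E I a"
    have hx: "x \<notin> I" "\<And>c. c \<in> I \<Longrightarrow> E x c \<Longrightarrow> c = a"
      and hy: "y \<notin> I" "\<And>c. c \<in> I \<Longrightarrow> E y c \<Longrightarrow> c = a"
      using xy unfolding X pack1_def nbhd_def by auto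
    let ?T = "insert x (insert y (I - {a}))"
    have "independent V E ?T"
      unfolding independent_def
    proof (intro conjI ballI)
      show "?T \<subseteq> V" using IV xyV by auto
    next
      fix u v assume "u \<in> ?T" "v \<in> ?T"
      then show "\<not> E u v" using hx hy Iind nxy g(3,4) by blast
    qed
    then have "card ?T \<le> card I" by (rule Imax)
    moreover have "finite I" using IV g(1) finite_subset by blast
    moreover have "card ?T = card I + 1"
      proof -
      have "card I > 0" using aI \<open>finite I\<close> by (auto simp: card_gt_0_iff)
      have c1: "card (I - {a}) = card I - 1" using aI \<open>finite I\<close> by (simp add: card_Diff_singleton)
      have c2: "card (insert y (I - {a})) = Suc (card (I - {a}))"
        proof (rule card_insert_disjoint)
          show "finite (I - {a})" using \<open>finite I\<close> by simp
          show "y \<notin> I - {a}" using hy(1) by simp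
        qed
      have c3: "card (insert x (insert y (I - {a}))) = Suc (card (insert y (I - {a})))"
        proof (rule card_insert_disjoint)
          show "finite (insert y (I - {a}))" using \<open>finite I\<close> by simp
          show "x \<notin> insert y (I - {a})" using hx(1) xy(3) by simp
        qed
      show ?thesis using c1 c2 c3 \<open>card I > 0\<close> by linarith
    qed
    ultimately show ?thesis by simp
  next
    fix a b assume aI: "a \<in> I" and bI: "b \<in> I" and ab: "a \<noteq> b" and X: "X = pack2 V E I a b"
    have hx: "x \<notin> I" "E x a" "E x b" "\<And>c. c \<in> I \<Longrightarrow> E x c \<Longrightarrow> c = a \<or> c = b"
      and hy: "y \<notin> I" "E y a" "E y b"
      using xy unfolding X pack2_def nbhd_def by auto
    have aV: "a \<in> V" and bV: "b \<in> V" using aI bI IV by auto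
    have nab: "\<not> E a b" using Iind aI bI by auto
    have claimD: "\<And>c z. c \<in> {a,b} \<Longrightarrow> z \<in> D \<Longrightarrow> E c z \<Longrightarrow> z = x \<or> z = y"
    proof -
      fix c z assume c: "c \<in> {a,b}" and z: "z \<in> D" "E c z"
      show "z = x \<or> z = y"
      proof (rule ccontr)
        assume "\<not> ?thesis"
        moreover have "E c x" "E c y" using c hx hy g(3) by auto
        moreover have "c \<in> V" using c aV bV by auto
        ultimately show False
          using cf[of c x y z] xyV z DV nxy Dind xy by blast
      qed
    qed
    let ?D' = "insert a (insert b (D - {x,y}))"
    have ind: "indep_dominating V E ?D'"
      unfolding indep_dominating_def independent_def
    proof (intro conjI ballI)
      show "?D' \<subseteq> V" using DV aV bV by auto
    next
      fix u v assume u: "u \<in> ?D'" and v: "v \<in> ?D'"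
      show "\<not> E u v"
      proof
        assume e: "E u v"
        show False
          using u v e nab g(3,4) Dind claimD by blast
      qed
    next
      fix v assume v: "v \<in> V - ?D'"
      show "\<exists>u\<in>?D'. E v u"
      proof (cases "v \<in> D")
        case True
        then have "v = x \<or> v = y" using v by auto
        then show ?thesis using hx hy by auto
      next
        case False
        then obtain u where u: "u \<in> D" "E v u" using Ddom v by auto
        show ?thesis
        proof (cases "u \<in> {x,y}")
          case False then show ?thesis using u by auto
        next
          case True
          show ?thesis
          proof (rule ccontr)
            assume nd: "\<not> ?thesis"
            then have "\<not> E v a" "\<not> E v b" by auto
            moreover have "v \<noteq> a" "v \<noteq> b" using v by auto
            moreover have "E u a" "E u b" "E u v" using True hx hy u g(3) by auto
            moreover have "u \<in> V" using u DV by auto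
            moreover have "v \<in> V" using v by auto
            ultimately show False using cf[of u a b v] aV bV nab ab g(3) by metis
          qed
        qed
      qed
    qed
    have fD: "finite D" using finite_subset[OF DV g(1)] .
    have f2: "finite (D - {x,y})" using fD by simp
    have "card ?D' \<le> Suc (card (insert b (D - {x,y})))" by (rule card_insert_le_Suc)
    also have "card (insert b (D - {x,y})) \<le> Suc (card (D - {x,y}))" by (rule card_insert_le_Suc)
    also have "card (D - {x,y}) = card D - card {x,y}"
      by (rule card_Diff_subset) (use xy in auto)
    also have "card {x,y} = 2" using xy(3) by simp
    finally have le: "card ?D' \<le> Suc (Suc (card D - 2))" by simp
    have "card {x,y} \<le> card D" by (rule card_mono[OF fD]) (use xy in auto)
    then have "card D \<ge> 2" using xy(3) by simp
    then have "card ?D' \<le> card D" using le by linarith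
    then have "min_indep_dominating V E ?D'"
      unfolding min_indep_dominating_def using ind Dmin by (meson le_trans)
    then show ?thesis using aI by (intro exI[of _ ?D']) auto
  qed
qed

end
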